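(* Let $k\in\mathbb{N}$, $p_k=3k-1$, $A_k=\{k,2k-1\}$ and $\mathcal{M}_k=\{ip_k+j:\ i\in\mathbb{N}_0,\ k\le j\le 2k-1\}$. For a game $X\subseteq\mathbb{N}_0$, one has $P(X)=\mathcal{M}_k$ if and only if $A_k\subseteq X\subseteq\mathcal{M}_k$.
   Context: A one-heap game is a set $X\subseteq\mathbb{N}_0$ of moves; from position $x\in\mathbb{N}_0$ one may move to $y\in\mathbb{N}_0$ iff $x-y\in X$. Misère play: a player who cannot move wins. If $0\in X$, $P(X)=\varnothing$. Otherwise: a position is an N-position if it has no option or some option is a P-position; otherwise it is a P-position; $P(X)$ denotes the set of P-positions. *)

theory Defs
  imports Main
begin

text \<open>Misere one-heap game with move set X.\<close>

function isP :: "nat set \<Rightarrow> nat \<Rightarrow> bool" where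
  "isP X x = (0 \<notin> X \<and> (\<exists>m\<in>X. m \<le> x) \<and>
              (\<forall>m\<in>X. 0 < m \<and> m \<le> x \<longrightarrow> \<not> isP X (x - m)))"
  by auto
termination by (relation "measure snd") auto

definition Ppos :: "nat set \<Rightarrow> nat set" where
  "Ppos X = {x. isP X x}"

definition pk :: "nat \<Rightarrow> nat" where
  "pk k = 3 * k - 1"

definition Ak :: "nat \<Rightarrow> nat set" where
  "Ak k = {k, 2 * k - 1}"

definition Mk :: "nat \<Rightarrow> nat set" where
  "Mk k = {i * pk k + j | i j. k \<le> j \<and> j \<le> 2 * k - 1}"

end

theory Submission imports Defs begin

lemma mod_sub:
  fixes x m p :: nat
  assumes "m \<le> x" "0 < p"
  shows "(x - m) mod p = (if m mod p \<le> x mod p then x mod p - m mod p else x mod p + p - m mod p)"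
proof -
  define a where "a = x div p" define r where "r = x mod p"
  define b where "b = m div p" define s where "s = m mod p"
  have x: "x = a*p + r" and m: "m = b*p + s" unfolding a_def r_def b_def s_def by simp_all
  have rp: "r < p" "s < p" using assms unfolding r_def s_def by simp_all
  show ?thesis
  proof (cases "s \<le> r")
    case True
    have "b \<le> a"
    proof (rule ccontr)
      assume "\<not> b \<le> a" then have "a + 1 \<le> b" by simp
      then have "(a+1)*p \<le> b*p" by (rule mult_le_mono1)
      then show False using assms(1) x m rp by (simp add: algebra_simps)
    qed
    then have "x - m = (a-b)*p + (r - s)" using x m True by (simp add: algebra_simps diff_mult_distrib)
    then have "(x - m) mod p = (r - s) mod p" by (metis mod_mult_self3)
    then show ?thesis using True rp by (simp add: r_def[symmetric] s_def[symmetric])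
  next
    case False
    have "b < a"
    proof (rule ccontr)
      assume "\<not> b < a" then have "a \<le> b" by simp
      then have "a*p \<le> b*p" by (rule mult_le_mono1)
      then show False using assms(1) x m rp False by linarith
    qed
    then obtain d where d: "a = Suc (b + d)" using less_iff_Suc_add by blast
    have ap: "a*p = p + b*p + d*p" using d by (simp add: algebra_simps)
    have "x - m = d*p + (r + p - s)" using x m ap rp by linarith
    then have "(x - m) mod p = (r + p - s) mod p" by (metis mod_mult_self3)
    moreover have "r + p - s < p" using False rp by simp
    ultimately show ?thesis using False by (simp add: r_def[symmetric] s_def[symmetric])
  qed
qed

lemma mod_add_small:
  fixes x m p :: nat
  assumes "0 < p" "x mod p + m < p"
  shows "(x + m) mod p = x mod p + m"
proof -
  have "x + m = (x div p) * p + (x mod p + m)" by simp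
  then show ?thesis using assms by (metis mod_mult_self3 mod_less)
qed

lemma Mk_iff:
  assumes "1 \<le> k"
  shows "x \<in> Mk k \<longleftrightarrow> k \<le> x mod (3*k-1) \<and> x mod (3*k-1) \<le> 2*k-1"
proof
  assume "x \<in> Mk k"
  then obtain i j where x: "x = i * (3*k-1) + j" "k \<le> j" "j \<le> 2*k-1"
    unfolding Mk_def pk_def by auto
  have "j < 3*k-1" using x assms by simp
  then have "x mod (3*k-1) = j" using x by simp
  then show "k \<le> x mod (3*k-1) \<and> x mod (3*k-1) \<le> 2*k-1" using x by simp
next
  assume h: "k \<le> x mod (3*k-1) \<and> x mod (3*k-1) \<le> 2*k-1"
  have "x = (x div (3*k-1)) * (3*k-1) + x mod (3*k-1)" by (metis div_mult_mod_eq)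
  then show "x \<in> Mk k" unfolding Mk_def pk_def using h by blast
qed

lemma isP_unfold: "isP X x = (0 \<notin> X \<and> (\<exists>m\<in>X. m \<le> x) \<and>
              (\<forall>m\<in>X. 0 < m \<and> m \<le> x \<longrightarrow> \<not> isP X (x - m)))"
  by (rule isP.simps)

declare isP.simps[simp del]

lemma backward:
  assumes k: "1 \<le> k" and A: "k \<in> X" "2*k-1 \<in> X" and XM: "X \<subseteq> Mk k"
  shows "isP X x \<longleftrightarrow> x \<in> Mk k"
proof (induction x rule: less_induct)
  case (less x)
  define p where "p = 3*k-1"
  have p0: "0 < p" "2*k - 1 < p" using k unfolding p_def by auto
  have Xm: "\<And>m. m \<in> X \<Longrightarrow> k \<le> m mod p \<and> m mod p \<le> 2*k-1"
    using XM Mk_iff[OF k] unfolding p_def by blast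
  have X0: "0 \<notin> X" using Xm[of 0] k by auto
  have Mx: "x \<in> Mk k \<longleftrightarrow> k \<le> x mod p \<and> x mod p \<le> 2*k-1" using Mk_iff[OF k] p_def by simp
  have IH: "\<And>y. y < x \<Longrightarrow> isP X y \<longleftrightarrow> k \<le> y mod p \<and> y mod p \<le> 2*k-1"
    using less Mk_iff[OF k] unfolding p_def by simp
  show ?case
  proof (cases "k \<le> x mod p \<and> x mod p \<le> 2*k-1")
    case True
    have "k \<le> x" using True by (meson le_trans mod_le_divisor mod_less_eq_dividend)
    moreover have "\<not> isP X (x - m)" if "m \<in> X" "0 < m" "m \<le> x" for m
    proof -
      have "x - m < x" using that by simp
      moreover have "\<not> (k \<le> (x-m) mod p \<and> (x-m) mod p \<le> 2*k-1)"
      proof -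
        define r where "r = x mod p" define s where "s = m mod p"
        have rs: "k \<le> r" "r \<le> 2*k-1" "k \<le> s" "s \<le> 2*k-1"
          using Xm[OF that(1)] True unfolding r_def s_def by auto
        have pe: "p = 3*k-1" by (rule p_def)
        have e: "(x-m) mod p = (if s \<le> r then r - s else r + p - s)"
          using mod_sub[OF that(3) p0(1)] unfolding r_def s_def by simp
        show ?thesis
        proof (cases "s \<le> r")
          case True then show ?thesis using e rs k by simp
        next
          case False
          have "2*k \<le> r + p - s" using rs k pe by arith
          then show ?thesis using e False k by simp
        qed
      qed
      ultimately show ?thesis using IH by blast
    qed
    ultimately have "isP X x" using isP_unfold[of X x] X0 A(1) by blast
    then show ?thesis using True Mx by simp
  next
    case False
    have "\<not> isP X x"
    proof (cases "x mod p < k")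
      case True
      show ?thesis
      proof (cases "x < k")
        case True
        have "\<not> (\<exists>m\<in>X. m \<le> x)"
        proof
          assume "\<exists>m\<in>X. m \<le> x"
          then obtain m where "m \<in> X" "m \<le> x" by blast
          then have "k \<le> m" using Xm by (meson le_trans mod_less_eq_dividend)
          then show False using True \<open>m \<le> x\<close> by simp
        qed
        then show ?thesis using isP_unfold[of X x] by blast
      next
        case False
        have "p \<le> x"
        proof (rule ccontr)
          assume "\<not> p \<le> x" then have "x mod p = x" by simp
          then show False using False \<open>x mod p < k\<close> by simp
        qed
        then have le: "2*k-1 \<le> x" using p0 by simp
        have "(x - (2*k-1)) mod p = x mod p + p - (2*k-1)"
          using mod_sub[OF le p0(1)] p0 True k by auto
        moreover have "x - (2*k-1) < x" using k le by simp
        ultimately have "isP X (x - (2*k-1))" using IH True k unfolding p_def by auto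
        moreover have "0 < 2*k-1" using k by simp
        ultimately show ?thesis using isP_unfold[of X x] A(2) le by blast
      qed
    next
      case False2: False
      have r: "2*k - 1 < x mod p" using False False2 by simp
      have "x mod p \<le> x" by (rule mod_less_eq_dividend)
      then have le: "k \<le> x" using r k by linarith
      have "(x - k) mod p = x mod p - k"
        using mod_sub[OF le p0(1)] p0 r k by auto
      moreover have "x mod p < p" using p0 by simp
      moreover have "x - k < x" using k le by simp
      moreover have "k \<le> x mod p - k" "x mod p - k \<le> 2*k-1" using r k p0 \<open>x mod p < p\<close> p_def by arith+
      ultimately have "isP X (x - k)" using IH by simp
      then show ?thesis using isP_unfold[of X x] A(1) le k by auto
    qed
    then show ?thesis using False Mx by simp
  qed
qed

theorem theorem8:
  fixes k :: nat and X :: "nat set"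
  assumes "1 \<le> k"
  shows "Ppos X = Mk k \<longleftrightarrow> Ak k \<subseteq> X \<and> X \<subseteq> Mk k"
proof
  assume "Ak k \<subseteq> X \<and> X \<subseteq> Mk k"
  then show "Ppos X = Mk k" using backward[OF assms] unfolding Ak_def Ppos_def by auto
next
  assume H: "Ppos X = Mk k"
  define p where "p = 3*k-1"
  have p0: "0 < p" "2*k - 1 < p" "2*k \<le> p" using assms unfolding p_def by auto
  have P: "\<And>x. isP X x \<longleftrightarrow> k \<le> x mod p \<and> x mod p \<le> 2*k-1"
    using H Mk_iff[OF assms] unfolding Ppos_def p_def by auto
  have kP: "isP X k" using P p0 by simp
  then have X0: "0 \<notin> X" using isP_unfold by blast
  have XM: "X \<subseteq> Mk k"
  proof
    fix m assume m: "m \<in> X"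
    show "m \<in> Mk k"
    proof (rule ccontr)
      assume "m \<notin> Mk k"
      then have nm: "\<not> (k \<le> m mod p \<and> m mod p \<le> 2*k-1)" using Mk_iff[OF assms] p_def by simp
      have mpos: "0 < m" using m X0 by (cases m) auto
      have mlt: "m mod p < p" using p0 by simp
      show False
      proof (cases "m mod p < k")
        case True
        have "(m + k) mod p = m mod p + k" using mod_add_small[OF p0(1)] True p0 by simp
        then have "isP X (m + k)" using P True by simp
        moreover have "isP X (m + k - m)" using kP by simp
        ultimately show False using isP_unfold[of X "m+k"] m mpos by auto
      next
        case False
        then have r: "2*k \<le> m mod p" using nm by simp
        have e: "m mod p + (2*k-1) = (m mod p - k) + p" using r p0 unfolding p_def by simp
        have "(m + (2*k-1)) mod p = (m mod p - k)"
        proof -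
          have "m + (2*k-1) = (m div p)*p + ((m mod p - k) + p)" using e div_mult_mod_eq[of m p] by linarith
          then have "(m + (2*k-1)) mod p = ((m mod p - k) + p) mod p" by (metis mod_mult_self3)
          also have "\<dots> = m mod p - k" using mlt by simp
          finally show ?thesis .
        qed
        moreover have "m mod p - k \<le> 2*k-1" using mlt p_def by arith
        moreover have "k \<le> m mod p - k" using r by arith
        ultimately have "isP X (m + (2*k-1))" using P by simp
        moreover have "isP X (m + (2*k-1) - m)" using P p0 assms by simp
        ultimately show False using isP_unfold[of X "m+(2*k-1)"] m mpos by auto
      qed
    qed
  qed
  have Xm: "\<And>m. m \<in> X \<Longrightarrow> k \<le> m mod p \<and> m mod p \<le> 2*k-1"
    using XM Mk_iff[OF assms] unfolding p_def by blast
  have Xk: "\<And>m. m \<in> X \<Longrightarrow> k \<le> m" using Xm by (meson le_trans mod_less_eq_dividend)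
  have kX: "k \<in> X"
  proof -
    obtain m where "m \<in> X" "m \<le> k" using kP isP_unfold by blast
    then show ?thesis using Xk by (metis le_antisym)
  qed
  have "\<not> isP X (p + (k-1))"
  proof -
    have "(p + (k-1)) mod p = (k - 1) mod p" by (metis mod_add_self1)
    also have "\<dots> = k - 1" using p0 by simp
    finally have "(p + (k-1)) mod p = k - 1" .
    then show ?thesis using P assms by simp
  qed
  moreover have "k \<le> p + (k-1)" using p0 by simp
  ultimately obtain m where m: "m \<in> X" "0 < m" "m \<le> p + (k-1)" "isP X (p + (k-1) - m)"
    using isP_unfold[of X "p + (k-1)"] X0 kX by blast
  have "k \<le> (p + (k-1) - m) mod p \<and> (p + (k-1) - m) mod p \<le> 2*k-1" using P m by blast
  then have a: "k \<le> p + (k-1) - m" by (meson le_trans mod_less_eq_dividend)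
  have mk: "k \<le> m" using Xk m(1) by blast
  have lt: "p + (k-1) - m < p" using mk assms p0 by linarith
  then have "(p + (k-1) - m) mod p = p + (k-1) - m" by (rule mod_less)
  then have b: "k \<le> p + (k-1) - m" "p + (k-1) - m \<le> 2*k-1"
    using \<open>k \<le> (p + (k-1) - m) mod p \<and> (p + (k-1) - m) mod p \<le> 2*k-1\<close> by simp_all
  have m1: "m < p" using b(1) m(3) assms by linarith
  then have "m mod p = m" by (rule mod_less)
  then have "m \<le> 2*k-1" using Xm[OF m(1)] by simp
  moreover have "2*k-1 \<le> m" using b(2) m(3) p_def assms by linarith
  ultimately have "m = 2*k-1" by (rule le_antisym)
  with m(1) kX XM show "Ak k \<subseteq> X \<and> X \<subseteq> Mk k" unfolding Ak_def by auto
qed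

end
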